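(* Let $R$ be a commutative ring with unit and $f\in R$ a non-nilpotent element. Then the map $\mathrm{res}\colon\mathrm{prim}(R[f^{-1}])\to\mathrm{prim}(R)$, $I\mapsto I\cap R$, induces a homeomorphism onto its image, which is compact in $\mathrm{prim}(R)$. Moreover, for any finite family of non-nilpotent elements $f_1,\dots,f_m\in R$ generating the unit ideal, the sets $\mathrm{res}(\mathrm{prim}(R[f_i^{-1}]))$, $i=1,\dots,m$, form a finite compact cover of $\mathrm{prim}(R)$.
   Context: $\mathrm{Id}(R)$ denotes the set of proper ideals of $R$, endowed with the constructible topology (induced by the product topology on $\{0,1\}^R$ via characteristic functions); it is compact. $\mathrm{prim}(R)$ is the closure in $\mathrm{Id}(R)$ of the set of primary ideals of $R$. $I\cap R$ means the preimage of $I$ under the canonical map $R\to R[f^{-1}]$. *)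

theory Defs
  imports "HOL-Analysis.Analysis" "HOL-Algebra.Algebra"
begin

definition proper_ideals :: "('a, 'b) ring_scheme \<Rightarrow> 'a set set" where
  "proper_ideals R = {I. ideal I R \<and> I \<noteq> carrier R}"

definition ideal_top :: "('a, 'b) ring_scheme \<Rightarrow> 'a set topology" where
  "ideal_top R = pullback_topology (proper_ideals R)
      (\<lambda>I. restrict (\<lambda>x. x \<in> I) (carrier R))
      (product_topology (\<lambda>_. discrete_topology (UNIV :: bool set)) (carrier R))"

definition primary_ideal :: "('a, 'b) ring_scheme \<Rightarrow> 'a set \<Rightarrow> bool" where
  "primary_ideal R I \<longleftrightarrow> ideal I R \<and> I \<noteq> carrier R \<and>
     (\<forall>a\<in>carrier R. \<forall>b\<in>carrier R. a \<otimes>\<^bsub>R\<^esub> b \<in> I \<longrightarrow> a \<notin> I \<longrightarrow>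
        (\<exists>n::nat. b [^]\<^bsub>R\<^esub> n \<in> I))"

definition prim :: "('a, 'b) ring_scheme \<Rightarrow> 'a set set" where
  "prim R = (ideal_top R) closure_of {I. primary_ideal R I}"

section \<open>Localization R[f^-1] as fractions a/f^n\<close>

definition loc_rel :: "('a, 'b) ring_scheme \<Rightarrow> 'a \<Rightarrow> (('a \<times> nat) \<times> ('a \<times> nat)) set" where
  "loc_rel R f = {((a, n), (b, m)). a \<in> carrier R \<and> b \<in> carrier R \<and>
     (\<exists>k::nat. f [^]\<^bsub>R\<^esub> k \<otimes>\<^bsub>R\<^esub>
        (a \<otimes>\<^bsub>R\<^esub> f [^]\<^bsub>R\<^esub> m \<ominus>\<^bsub>R\<^esub> b \<otimes>\<^bsub>R\<^esub> f [^]\<^bsub>R\<^esub> n) = \<zero>\<^bsub>R\<^esub>)}"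

definition loc_class :: "('a, 'b) ring_scheme \<Rightarrow> 'a \<Rightarrow> 'a \<times> nat \<Rightarrow> ('a \<times> nat) set" where
  "loc_class R f p = loc_rel R f `` {p}"

definition loc_rep :: "('a \<times> nat) set \<Rightarrow> 'a \<times> nat" where
  "loc_rep A = (SOME q. q \<in> A)"

definition loc_ring :: "('a, 'b) ring_scheme \<Rightarrow> 'a \<Rightarrow> ('a \<times> nat) set ring" where
  "loc_ring R f = \<lparr>
     carrier = (carrier R \<times> (UNIV :: nat set)) // loc_rel R f,
     monoid.mult = (\<lambda>U V. case loc_rep U of (a, n) \<Rightarrow> case loc_rep V of (b, m) \<Rightarrow>
                      loc_class R f (a \<otimes>\<^bsub>R\<^esub> b, n + m)),
     monoid.one = loc_class R f (\<one>\<^bsub>R\<^esub>, 0),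
     ring.zero = loc_class R f (\<zero>\<^bsub>R\<^esub>, 0),
     ring.add = (\<lambda>U V. case loc_rep U of (a, n) \<Rightarrow> case loc_rep V of (b, m) \<Rightarrow>
                      loc_class R f (a \<otimes>\<^bsub>R\<^esub> f [^]\<^bsub>R\<^esub> m \<oplus>\<^bsub>R\<^esub> b \<otimes>\<^bsub>R\<^esub> f [^]\<^bsub>R\<^esub> n, n + m))
   \<rparr>"

definition loc_map :: "('a, 'b) ring_scheme \<Rightarrow> 'a \<Rightarrow> 'a \<Rightarrow> ('a \<times> nat) set" where
  "loc_map R f a = loc_class R f (a, 0)"

text \<open>res(I) = I \<inter> R, the preimage of I under the canonical map.\<close>
definition res :: "('a, 'b) ring_scheme \<Rightarrow> 'a \<Rightarrow> ('a \<times> nat) set set \<Rightarrow> 'a set" where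
  "res R f I = {a \<in> carrier R. loc_map R f a \<in> I}"

end

theory Submission
  imports Defs
begin


lemma (in cring) minus_zero_iff:
  assumes "c \<in> carrier R" "x \<in> carrier R" "y \<in> carrier R"
  shows "c \<otimes> (x \<ominus> y) = \<zero> \<longleftrightarrow> c \<otimes> x = c \<otimes> y"
proof -
  have "c \<otimes> (x \<ominus> y) = c \<otimes> x \<ominus> c \<otimes> y"
    using assms by (simp add: minus_eq r_distr r_minus)
  then show ?thesis using assms by (simp add: r_right_minus_eq)
qed

lemma (in cring) ideal_intro2:
  assumes "I \<subseteq> carrier R" "\<zero> \<in> I" "\<And>a b. a \<in> I \<Longrightarrow> b \<in> I \<Longrightarrow> a \<oplus> b \<in> I"
    "\<And>a r. a \<in> I \<Longrightarrow> r \<in> carrier R \<Longrightarrow> r \<otimes> a \<in> I"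
  shows "ideal I R"
proof (rule idealI[OF ring_axioms])
  show "subgroup I (add_monoid R)"
  proof (rule add.subgroupI)
    show "I \<subseteq> carrier R" using assms(1) by simp
    show "I \<noteq> {}" using assms(2) by auto
    fix a assume a: "a \<in> I"
    then have "a \<in> carrier R" using assms(1) by auto
    then have "\<ominus> a = (\<ominus> \<one>) \<otimes> a" by (simp add: l_minus)
    then show "\<ominus> a \<in> I" using assms(4)[OF a, of "\<ominus> \<one>"] by simp
  next
    fix a b assume "a \<in> I" "b \<in> I" then show "a \<oplus> b \<in> I" using assms(3) by simp
  qed
next
  fix a x assume "a \<in> I" "x \<in> carrier R" then show "x \<otimes> a \<in> I" using assms(4) by simp
next
  fix a x assume "a \<in> I" "x \<in> carrier R" then show "a \<otimes> x \<in> I" using assms(1) assms(4)[of a x] m_comm[of a x] by auto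
qed

lemma (in cring) pow_sum_in_ideal:
  assumes QI: "ideal Q R" and x: "x \<in> carrier R" and y: "y \<in> carrier R"
    and xa: "x [^] (a::nat) \<in> Q" and yb: "y [^] (b::nat) \<in> Q"
  shows "\<forall>i j. a + b \<le> i + j + k \<longrightarrow> x [^] (i::nat) \<otimes> y [^] (j::nat) \<otimes> (x \<oplus> y) [^] (k::nat) \<in> Q"
proof (induction k)
  case 0
  show ?case
  proof (intro allI impI)
    fix i j :: nat assume "a + b \<le> i + j + 0"
    then have "a \<le> i \<or> b \<le> j" by arith
    then show "x [^] i \<otimes> y [^] j \<otimes> (x \<oplus> y) [^] (0::nat) \<in> Q"
    proof
      assume "a \<le> i"
      then have "x [^] i = x [^] a \<otimes> x [^] (i - a)" using x by (simp add: nat_pow_mult)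
      then have "x [^] i \<in> Q" using xa ideal.I_r_closed[OF QI] x by simp
      then show ?thesis using ideal.I_r_closed[OF QI] x y by simp
    next
      assume "b \<le> j"
      then have "y [^] j = y [^] b \<otimes> y [^] (j - b)" using y by (simp add: nat_pow_mult)
      then have "y [^] j \<in> Q" using yb ideal.I_r_closed[OF QI] y by simp
      then show ?thesis using ideal.I_r_closed[OF QI] ideal.I_l_closed[OF QI] x y by simp
    qed
  qed
next
  case (Suc k)
  show ?case
  proof (intro allI impI)
    fix i j :: nat assume "a + b \<le> i + j + Suc k"
    then have "a + b \<le> Suc i + j + k" "a + b \<le> i + Suc j + k" by simp_all
    then have h1: "x [^] Suc i \<otimes> y [^] j \<otimes> (x \<oplus> y) [^] k \<in> Q"
      and h2: "x [^] i \<otimes> y [^] Suc j \<otimes> (x \<oplus> y) [^] k \<in> Q"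
      using Suc.IH[rule_format, of "Suc i" j] Suc.IH[rule_format, of i "Suc j"] by (simp_all del: nat_pow_Suc)
    have "x [^] i \<otimes> y [^] j \<otimes> (x \<oplus> y) [^] Suc k =
      x [^] Suc i \<otimes> y [^] j \<otimes> (x \<oplus> y) [^] k \<oplus> x [^] i \<otimes> y [^] Suc j \<otimes> (x \<oplus> y) [^] k"
      using x y by (simp add: r_distr l_distr m_ac)
    then show "x [^] i \<otimes> y [^] j \<otimes> (x \<oplus> y) [^] Suc k \<in> Q"
      using h1 h2 additive_subgroup.a_closed[OF ideal.axioms(1)[OF QI]] by simp
  qed
qed

lemma (in cring) primary_cover:
  assumes Q: "primary_ideal R Q" and fs: "\<forall>i<m. fs i \<in> carrier R"
    and gen: "Idl (fs ` {..<m}) = carrier R"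
  shows "\<exists>i<m. \<forall>n::nat. fs i [^] n \<notin> Q"
proof (rule ccontr)
  assume H: "\<not> ?thesis"
  have QI: "ideal Q R" and Q1: "Q \<noteq> carrier R" using Q by (auto simp: primary_ideal_def)
  define Rad where "Rad = {x \<in> carrier R. \<exists>n::nat. x [^] n \<in> Q}"
  have RI: "ideal Rad R"
  proof (rule ideal_intro2)
    show "Rad \<subseteq> carrier R" by (auto simp: Rad_def)
    have "\<zero> [^] (1::nat) \<in> Q" using additive_subgroup.zero_closed[OF ideal.axioms(1)[OF QI]] by simp
    then show "\<zero> \<in> Rad" unfolding Rad_def by blast
  next
    fix x y assume "x \<in> Rad" "y \<in> Rad"
    then obtain a b :: nat where x: "x \<in> carrier R" "x [^] a \<in> Q" and y: "y \<in> carrier R" "y [^] b \<in> Q"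
      by (auto simp: Rad_def)
    have "x [^] (0::nat) \<otimes> y [^] (0::nat) \<otimes> (x \<oplus> y) [^] (a + b) \<in> Q"
      using pow_sum_in_ideal[OF QI x(1) y(1) x(2) y(2), of "a + b", rule_format, of 0 0] by simp
    then show "x \<oplus> y \<in> Rad" using x y unfolding Rad_def by (simp del: nat_pow_0) (metis a_closed l_one nat_pow_0 one_closed r_one nat_pow_closed)
  next
    fix x r assume "x \<in> Rad" "r \<in> carrier R"
    then obtain a :: nat where x: "x \<in> carrier R" "x [^] a \<in> Q" and r: "r \<in> carrier R"
      by (auto simp: Rad_def)
    have "(r \<otimes> x) [^] a = r [^] a \<otimes> x [^] a" using x r by (simp add: nat_pow_distrib)
    then have "(r \<otimes> x) [^] a \<in> Q" using ideal.I_l_closed[OF QI] x r by simp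
    then show "r \<otimes> x \<in> Rad" using x r unfolding Rad_def by blast
  qed
  have "fs ` {..<m} \<subseteq> Rad" using H fs by (auto simp: Rad_def)
  then have "carrier R \<subseteq> Rad" using genideal_minimal[OF RI, of "fs ` {..<m}"] gen by simp
  then obtain n :: nat where "\<one> [^] n \<in> Q" by (auto simp: Rad_def)
  then show False using ideal.one_imp_carrier[OF QI] Q1 by simp
qed

locale locf = cring R for R (structure) + fixes f assumes f_in[simp]: "f \<in> carrier R"
begin

abbreviation "rel \<equiv> loc_rel R f"
abbreviation "cls \<equiv> loc_class R f"
abbreviation "L \<equiv> loc_ring R f"

lemma rel_iff:
  "((a, n), (b, m)) \<in> rel \<longleftrightarrow> a \<in> carrier R \<and> b \<in> carrier R \<and>
     (\<exists>k::nat. f [^] k \<otimes> (a \<otimes> f [^] m) = f [^] k \<otimes> (b \<otimes> f [^] n))"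
  unfolding loc_rel_def using minus_zero_iff by auto

lemma rel_refl: "a \<in> carrier R \<Longrightarrow> ((a, n), (a, n)) \<in> rel"
  by (auto simp: rel_iff)

lemma rel_sym: "((a, n), (b, m)) \<in> rel \<Longrightarrow> ((b, m), (a, n)) \<in> rel"
  by (auto simp: rel_iff) metis

lemma rel_trans:
  assumes "((a, n), (b, m)) \<in> rel" "((b, m), (c, p)) \<in> rel"
  shows "((a, n), (c, p)) \<in> rel"
proof -
  from assms obtain k l :: nat where a: "a \<in> carrier R" and b: "b \<in> carrier R" and c: "c \<in> carrier R"
    and E1: "f [^] k \<otimes> (a \<otimes> f [^] m) = f [^] k \<otimes> (b \<otimes> f [^] n)"
    and E2: "f [^] l \<otimes> (b \<otimes> f [^] p) = f [^] l \<otimes> (c \<otimes> f [^] m)"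
    by (auto simp: rel_iff)
  have "f [^] (k + l + m) \<otimes> (a \<otimes> f [^] p) = (f [^] k \<otimes> (a \<otimes> f [^] m)) \<otimes> (f [^] l \<otimes> f [^] p)"
    using a by (simp add: nat_pow_mult[symmetric] m_ac)
  also have "\<dots> = (f [^] k \<otimes> (b \<otimes> f [^] n)) \<otimes> (f [^] l \<otimes> f [^] p)" by (simp add: E1)
  also have "\<dots> = (f [^] l \<otimes> (b \<otimes> f [^] p)) \<otimes> (f [^] k \<otimes> f [^] n)"
    using b by (simp add: m_ac)
  also have "\<dots> = (f [^] l \<otimes> (c \<otimes> f [^] m)) \<otimes> (f [^] k \<otimes> f [^] n)" by (simp add: E2)
  also have "\<dots> = f [^] (k + l + m) \<otimes> (c \<otimes> f [^] n)"
    using c by (simp add: nat_pow_mult[symmetric] m_ac)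
  finally show ?thesis using a c by (auto simp: rel_iff)
qed

lemma rel_equiv: "equiv (carrier R \<times> UNIV) rel"
proof (rule equivI)
  show "refl_on (carrier R \<times> UNIV) rel"
    by (auto simp: refl_on_def rel_refl)
  show "rel \<subseteq> (carrier R \<times> UNIV) \<times> (carrier R \<times> UNIV)" by (auto simp: loc_rel_def)
  show "sym rel" by (auto simp: sym_def intro: rel_sym)
  show "trans rel" by (auto simp: trans_def intro: rel_trans)
qed

lemma mult_compat:
  assumes "((a, n), (a', n')) \<in> rel" "((b, m), (b', m')) \<in> rel"
  shows "((a \<otimes> b, n + m), (a' \<otimes> b', n' + m')) \<in> rel"
proof -
  from assms obtain k l :: nat where a: "a \<in> carrier R" "a' \<in> carrier R" and b: "b \<in> carrier R" "b' \<in> carrier R"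
    and E1: "f [^] k \<otimes> (a \<otimes> f [^] n') = f [^] k \<otimes> (a' \<otimes> f [^] n)"
    and E2: "f [^] l \<otimes> (b \<otimes> f [^] m') = f [^] l \<otimes> (b' \<otimes> f [^] m)"
    by (auto simp: rel_iff)
  have "f [^] (k + l) \<otimes> (a \<otimes> b \<otimes> f [^] (n' + m')) = (f [^] k \<otimes> (a \<otimes> f [^] n')) \<otimes> (f [^] l \<otimes> (b \<otimes> f [^] m'))"
    using a b by (simp add: nat_pow_mult[symmetric] m_ac)
  also have "\<dots> = (f [^] k \<otimes> (a' \<otimes> f [^] n)) \<otimes> (f [^] l \<otimes> (b' \<otimes> f [^] m))" by (simp add: E1 E2)
  also have "\<dots> = f [^] (k + l) \<otimes> (a' \<otimes> b' \<otimes> f [^] (n + m))"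
    using a b by (simp add: nat_pow_mult[symmetric] m_ac)
  finally show ?thesis using a b by (auto simp: rel_iff)
qed

lemma add_compat:
  assumes "((a, n), (a', n')) \<in> rel" "((b, m), (b', m')) \<in> rel"
  shows "((a \<otimes> f [^] m \<oplus> b \<otimes> f [^] n, n + m), (a' \<otimes> f [^] m' \<oplus> b' \<otimes> f [^] n', n' + m')) \<in> rel"
proof -
  from assms obtain k l :: nat where a: "a \<in> carrier R" "a' \<in> carrier R" and b: "b \<in> carrier R" "b' \<in> carrier R"
    and E1: "f [^] k \<otimes> (a \<otimes> f [^] n') = f [^] k \<otimes> (a' \<otimes> f [^] n)"
    and E2: "f [^] l \<otimes> (b \<otimes> f [^] m') = f [^] l \<otimes> (b' \<otimes> f [^] m)"
    by (auto simp: rel_iff)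
  have "f [^] (k + l) \<otimes> ((a \<otimes> f [^] m \<oplus> b \<otimes> f [^] n) \<otimes> f [^] (n' + m')) =
     (f [^] k \<otimes> (a \<otimes> f [^] n')) \<otimes> (f [^] l \<otimes> f [^] m \<otimes> f [^] m') \<oplus>
     (f [^] l \<otimes> (b \<otimes> f [^] m')) \<otimes> (f [^] k \<otimes> f [^] n \<otimes> f [^] n')"
    using a b by (simp add: nat_pow_mult[symmetric] m_ac l_distr r_distr)
  also have "\<dots> = (f [^] k \<otimes> (a' \<otimes> f [^] n)) \<otimes> (f [^] l \<otimes> f [^] m \<otimes> f [^] m') \<oplus>
     (f [^] l \<otimes> (b' \<otimes> f [^] m)) \<otimes> (f [^] k \<otimes> f [^] n \<otimes> f [^] n')" by (simp add: E1 E2)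
  also have "\<dots> = f [^] (k + l) \<otimes> ((a' \<otimes> f [^] m' \<oplus> b' \<otimes> f [^] n') \<otimes> f [^] (n + m))"
    using a b by (simp add: nat_pow_mult[symmetric] m_ac l_distr r_distr a_ac)
  finally show ?thesis using a b by (auto simp: rel_iff)
qed

lemma mem_cls: "q \<in> cls p \<longleftrightarrow> (p, q) \<in> rel"
  by (simp add: loc_class_def)

lemma cls_eq_iff: "a \<in> carrier R \<Longrightarrow> b \<in> carrier R \<Longrightarrow> cls (a, n) = cls (b, m) \<longleftrightarrow> ((a, n), (b, m)) \<in> rel"
  unfolding loc_class_def using eq_equiv_class_iff[OF rel_equiv] by auto

lemma cls_eqI: "((a, n), (b, m)) \<in> rel \<Longrightarrow> cls (a, n) = cls (b, m)"
  unfolding loc_class_def using equiv_class_eq[OF rel_equiv] by auto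

lemma carrier_L: "carrier L = {cls (a, n) | a n. a \<in> carrier R}"
  unfolding loc_ring_def quotient_def loc_class_def by auto

lemma cls_in_L [simp]: "a \<in> carrier R \<Longrightarrow> cls (a, n) \<in> carrier L"
  by (auto simp: carrier_L)

lemma self_in_cls: "a \<in> carrier R \<Longrightarrow> (a, n) \<in> cls (a, n)"
  by (simp add: mem_cls rel_refl)

lemma in_L_eq:
  assumes "U \<in> carrier L" "(a, n) \<in> U"
  shows "a \<in> carrier R" "U = cls (a, n)"
proof -
  from assms(1) obtain b m where b: "b \<in> carrier R" "U = cls (b, m)" by (auto simp: carrier_L)
  with assms(2) have r: "((b, m), (a, n)) \<in> rel" by (simp add: mem_cls)
  then show "a \<in> carrier R" by (simp add: rel_iff)
  show "U = cls (a, n)" using b cls_eqI[OF r] by simp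
qed

lemma rep_in: "U \<in> carrier L \<Longrightarrow> loc_rep U \<in> U"
  unfolding loc_rep_def by (rule someI_ex) (auto simp: carrier_L intro: self_in_cls)

lemma rep_cls:
  assumes "a \<in> carrier R" obtains a' n' where "loc_rep (cls (a, n)) = (a', n')" "((a, n), (a', n')) \<in> rel"
  using rep_in[OF cls_in_L[OF assms, of n]] by (cases "loc_rep (cls (a, n))") (auto simp: mem_cls)

lemma mult_cls: "a \<in> carrier R \<Longrightarrow> b \<in> carrier R \<Longrightarrow> cls (a, n) \<otimes>\<^bsub>L\<^esub> cls (b, m) = cls (a \<otimes> b, n + m)"
  apply (rule rep_cls[of a n], assumption)
  apply (rule rep_cls[of b m], assumption)
  apply (simp add: loc_ring_def)
  apply (rule sym, rule cls_eqI, rule mult_compat, assumption+)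
  done

lemma add_cls: "a \<in> carrier R \<Longrightarrow> b \<in> carrier R \<Longrightarrow>
   cls (a, n) \<oplus>\<^bsub>L\<^esub> cls (b, m) = cls (a \<otimes> f [^] m \<oplus> b \<otimes> f [^] n, n + m)"
  apply (rule rep_cls[of a n], assumption)
  apply (rule rep_cls[of b m], assumption)
  apply (simp add: loc_ring_def)
  apply (rule sym, rule cls_eqI, rule add_compat, assumption+)
  done

lemma one_L: "\<one>\<^bsub>L\<^esub> = cls (\<one>, 0)" by (simp add: loc_ring_def)
lemma zero_L: "\<zero>\<^bsub>L\<^esub> = cls (\<zero>, 0)" by (simp add: loc_ring_def)

lemma L_cases:
  assumes "U \<in> carrier L" obtains a n where "a \<in> carrier R" "U = cls (a, n)"
  using assms by (auto simp: carrier_L)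

lemma cring_L: "cring L"
proof (rule cringI)
  show "abelian_group L"
  proof (rule abelian_groupI)
    fix x y assume "x \<in> carrier L" "y \<in> carrier L"
    then show "x \<oplus>\<^bsub>L\<^esub> y \<in> carrier L"
      by (elim L_cases) (simp add: add_cls)
  next
    show "\<zero>\<^bsub>L\<^esub> \<in> carrier L" by (simp add: zero_L)
  next
    fix x y z assume "x \<in> carrier L" "y \<in> carrier L" "z \<in> carrier L"
    then show "x \<oplus>\<^bsub>L\<^esub> y \<oplus>\<^bsub>L\<^esub> z = x \<oplus>\<^bsub>L\<^esub> (y \<oplus>\<^bsub>L\<^esub> z)"
      by (elim L_cases) (simp add: add_cls nat_pow_mult[symmetric] m_ac l_distr r_distr a_ac add.assoc)
  next
    fix x y assume "x \<in> carrier L" "y \<in> carrier L"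
    then show "x \<oplus>\<^bsub>L\<^esub> y = y \<oplus>\<^bsub>L\<^esub> x"
      by (elim L_cases) (simp add: add_cls a_ac add.commute)
  next
    fix x assume "x \<in> carrier L"
    then show "\<zero>\<^bsub>L\<^esub> \<oplus>\<^bsub>L\<^esub> x = x"
      by (elim L_cases) (simp add: add_cls zero_L)
  next
    fix x assume "x \<in> carrier L"
    then obtain a n where a: "a \<in> carrier R" "x = cls (a, n)" by (elim L_cases)
    have "cls (\<ominus> a, n) \<oplus>\<^bsub>L\<^esub> x = cls (\<zero>, 0)"
      using a by (simp add: add_cls l_minus l_neg cls_eq_iff rel_iff)
    then show "\<exists>y\<in>carrier L. y \<oplus>\<^bsub>L\<^esub> x = \<zero>\<^bsub>L\<^esub>"
      using a by (auto simp: zero_L intro!: bexI[of _ "cls (\<ominus> a, n)"])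
  qed
next
  show "comm_monoid L"
  proof (rule comm_monoidI)
    fix x y assume "x \<in> carrier L" "y \<in> carrier L"
    then show "x \<otimes>\<^bsub>L\<^esub> y \<in> carrier L"
      by (elim L_cases) (simp add: mult_cls)
  next
    show "\<one>\<^bsub>L\<^esub> \<in> carrier L" by (simp add: one_L)
  next
    fix x y z assume "x \<in> carrier L" "y \<in> carrier L" "z \<in> carrier L"
    then show "x \<otimes>\<^bsub>L\<^esub> y \<otimes>\<^bsub>L\<^esub> z = x \<otimes>\<^bsub>L\<^esub> (y \<otimes>\<^bsub>L\<^esub> z)"
      by (elim L_cases) (simp add: mult_cls m_ac add.assoc)
  next
    fix x assume "x \<in> carrier L"
    then show "\<one>\<^bsub>L\<^esub> \<otimes>\<^bsub>L\<^esub> x = x"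
      by (elim L_cases) (simp add: mult_cls one_L)
  next
    fix x y assume "x \<in> carrier L" "y \<in> carrier L"
    then show "x \<otimes>\<^bsub>L\<^esub> y = y \<otimes>\<^bsub>L\<^esub> x"
      by (elim L_cases) (simp add: mult_cls m_ac add.commute)
  qed
next
  fix x y z assume "x \<in> carrier L" "y \<in> carrier L" "z \<in> carrier L"
  then obtain a n b m c p where abc: "a \<in> carrier R" "b \<in> carrier R" "c \<in> carrier R"
    "x = cls (a, n)" "y = cls (b, m)" "z = cls (c, p)" by (metis L_cases)
  have "cls ((a \<otimes> f [^] m \<oplus> b \<otimes> f [^] n) \<otimes> c, n + m + p) =
        cls (a \<otimes> c \<otimes> f [^] (m + p) \<oplus> b \<otimes> c \<otimes> f [^] (n + p), n + p + (m + p))"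
    using abc by (simp add: cls_eq_iff rel_iff) (rule exI[of _ 0], simp add: nat_pow_mult[symmetric] m_ac l_distr r_distr a_ac)
  then show "(x \<oplus>\<^bsub>L\<^esub> y) \<otimes>\<^bsub>L\<^esub> z = x \<otimes>\<^bsub>L\<^esub> z \<oplus>\<^bsub>L\<^esub> y \<otimes>\<^bsub>L\<^esub> z"
    using abc by (simp add: add_cls mult_cls)
qed


interpretation Lr: cring L by (rule cring_L)

lemma pow_cls: "a \<in> carrier R \<Longrightarrow> cls (a, n) [^]\<^bsub>L\<^esub> (k::nat) = cls (a [^] k, n * k)"
  by (induction k) (simp_all add: one_L mult_cls add.commute)

lemma ideal_mem_iff:
  assumes I: "ideal I L" and U: "U \<in> carrier L" "(a, n) \<in> U"
  shows "U \<in> I \<longleftrightarrow> cls (a, 0) \<in> I"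
proof -
  have a: "a \<in> carrier R" and Ue: "U = cls (a, n)" using in_L_eq[OF U] by auto
  have e1: "cls (a, 0) = U \<otimes>\<^bsub>L\<^esub> cls (f [^] n, 0)"
    using a by (simp add: Ue mult_cls cls_eq_iff rel_iff)
  have e2: "U = cls (a, 0) \<otimes>\<^bsub>L\<^esub> cls (\<one>, n)"
    using a by (simp add: Ue mult_cls)
  show ?thesis
  proof
    assume "U \<in> I" then show "cls (a, 0) \<in> I" using e1 ideal.I_r_closed[OF I] by simp
  next
    assume "cls (a, 0) \<in> I" then show "U \<in> I" using e2 ideal.I_r_closed[OF I] by simp
  qed
qed

lemma ideal_rep:
  assumes I: "ideal I L"
  shows "I = {U \<in> carrier L. fst (loc_rep U) \<in> res R f I}"
proof -
  have "U \<in> I \<longleftrightarrow> fst (loc_rep U) \<in> res R f I" if U: "U \<in> carrier L" for U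
  proof -
    obtain a n where r: "loc_rep U = (a, n)" by (cases "loc_rep U")
    with rep_in[OF U] have "(a, n) \<in> U" by simp
    then show ?thesis using ideal_mem_iff[OF I U] in_L_eq[OF U] r by (auto simp: res_def loc_map_def)
  qed
  moreover have "I \<subseteq> carrier L" using I by (simp add: ideal.Icarr subsetI)
  ultimately show ?thesis by blast
qed

lemma res_proper:
  assumes I: "ideal I L" "I \<noteq> carrier L"
  shows "res R f I \<in> proper_ideals R"
proof -
  have "ideal (res R f I) R"
  proof (rule ideal_intro2)
    show "res R f I \<subseteq> carrier R" by (auto simp: res_def)
    show "\<zero> \<in> res R f I" using additive_subgroup.zero_closed[OF ideal.axioms(1)[OF I(1)]]
      by (simp add: res_def loc_map_def zero_L)
    fix a b assume "a \<in> res R f I" "b \<in> res R f I"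
    then show "a \<oplus> b \<in> res R f I"
      using additive_subgroup.a_closed[OF ideal.axioms(1)[OF I(1)], of "cls (a, 0)" "cls (b, 0)"]
      by (simp add: res_def loc_map_def add_cls)
  next
    fix a r assume "a \<in> res R f I" "r \<in> carrier R"
    then show "r \<otimes> a \<in> res R f I"
      using ideal.I_l_closed[OF I(1), of "cls (a, 0)" "cls (r, 0)"]
      by (simp add: res_def loc_map_def mult_cls)
  qed
  moreover have "\<one> \<notin> res R f I"
    using ideal.one_imp_carrier[OF I(1)] I(2) by (auto simp: res_def loc_map_def one_L)
  ultimately show ?thesis by (auto simp: proper_ideals_def)
qed

lemma res_primary:
  assumes "primary_ideal L I" shows "primary_ideal R (res R f I)"
proof -
  have I: "ideal I L" "I \<noteq> carrier L" using assms by (auto simp: primary_ideal_def)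
  have P: "res R f I \<in> proper_ideals R" by (rule res_proper[OF I])
  { fix a b assume ab: "a \<in> carrier R" "b \<in> carrier R" "a \<otimes> b \<in> res R f I" "a \<notin> res R f I"
    then have "cls (a, 0) \<otimes>\<^bsub>L\<^esub> cls (b, 0) \<in> I" "cls (a, 0) \<notin> I"
      by (auto simp: res_def loc_map_def mult_cls)
    then obtain k :: nat where "cls (b, 0) [^]\<^bsub>L\<^esub> k \<in> I"
      using assms ab unfolding primary_ideal_def by (meson cls_in_L)
    then have "b [^] k \<in> res R f I" using ab by (simp add: pow_cls res_def loc_map_def)
    then have "\<exists>k::nat. b [^] k \<in> res R f I" by blast }
  then show ?thesis using P by (auto simp: primary_ideal_def proper_ideals_def)
qed


lemma ext_primary:
  assumes Q: "primary_ideal R Q" and nf: "\<forall>n::nat. f [^] n \<notin> Q"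
  shows "\<exists>E. primary_ideal L E \<and> res R f E = Q"
proof -
  have QI: "ideal Q R" and Q1: "Q \<noteq> carrier R" using Q by (auto simp: primary_ideal_def)
  have Qc: "Q \<subseteq> carrier R" using QI by (simp add: ideal.Icarr subsetI)
  have sat: "b \<in> Q" if r: "((a, n), (b, m)) \<in> rel" and aQ: "a \<in> Q" for a b n m
  proof -
    obtain k :: nat where a: "a \<in> carrier R" and b: "b \<in> carrier R"
      and E: "f [^] k \<otimes> (a \<otimes> f [^] m) = f [^] k \<otimes> (b \<otimes> f [^] n)"
      using r by (auto simp: rel_iff)
    have "f [^] k \<otimes> (a \<otimes> f [^] m) \<in> Q"
      using aQ ideal.I_l_closed[OF QI] ideal.I_r_closed[OF QI] by simp
    then have "b \<otimes> f [^] (k + n) \<in> Q" using b by (simp add: E nat_pow_mult[symmetric] m_ac)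
    show "b \<in> Q"
    proof (rule ccontr)
      assume "b \<notin> Q"
      then obtain N :: nat where "(f [^] (k + n)) [^] N \<in> Q"
        using Q b \<open>b \<otimes> f [^] (k + n) \<in> Q\<close> unfolding primary_ideal_def by (meson f_in nat_pow_closed)
      then show False using nf by (simp add: nat_pow_pow)
    qed
  qed
  define E where "E = {U \<in> carrier L. fst (loc_rep U) \<in> Q}"
  have Ecls: "cls (a, n) \<in> E \<longleftrightarrow> a \<in> Q" if a: "a \<in> carrier R" for a n
  proof -
    obtain a' n' where "loc_rep (cls (a, n)) = (a', n')" "((a, n), (a', n')) \<in> rel"
      using rep_cls[OF a] by metis
    moreover have "cls (a, n) \<in> carrier L" using a by simp
    ultimately show ?thesis using sat[of a n a' n'] sat[of a' n' a n] rel_sym[of a n a' n'] by (simp add: E_def) blast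
  qed
  have EI: "ideal E L"
  proof (rule Lr.ideal_intro2)
    show "E \<subseteq> carrier L" by (auto simp: E_def)
    show "\<zero>\<^bsub>L\<^esub> \<in> E" using Ecls[of "\<zero>" 0] additive_subgroup.zero_closed[OF ideal.axioms(1)[OF QI]]
      by (simp add: zero_L)
  next
    fix U V assume UV: "U \<in> E" "V \<in> E"
    then have "U \<in> carrier L" "V \<in> carrier L" by (auto simp: E_def)
    then obtain a n b m where ab: "a \<in> carrier R" "U = cls (a, n)" "b \<in> carrier R" "V = cls (b, m)"
      by (metis L_cases)
    then have "a \<in> Q" "b \<in> Q" using UV Ecls by auto
    then have "a \<otimes> f [^] m \<oplus> b \<otimes> f [^] n \<in> Q"
      using ideal.I_r_closed[OF QI] additive_subgroup.a_closed[OF ideal.axioms(1)[OF QI]] by simp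
    then show "U \<oplus>\<^bsub>L\<^esub> V \<in> E"
      using ab Ecls by (simp add: add_cls)
  next
    fix U V assume UV: "U \<in> E" "V \<in> carrier L"
    then have "U \<in> carrier L" by (auto simp: E_def)
    then obtain a n b m where ab: "a \<in> carrier R" "U = cls (a, n)" "b \<in> carrier R" "V = cls (b, m)"
      using UV(2) by (metis L_cases)
    then have "a \<in> Q" using UV Ecls by auto
    then have "b \<otimes> a \<in> Q" using ideal.I_l_closed[OF QI] ab by simp
    then show "V \<otimes>\<^bsub>L\<^esub> U \<in> E"
      using ab Ecls by (simp add: mult_cls)
  qed
  have one_notin: "\<one> \<notin> Q" using ideal.one_imp_carrier[OF QI] Q1 by auto
  have EP: "primary_ideal L E"
    unfolding primary_ideal_def
  proof (intro conjI ballI impI)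
    show "ideal E L" by (rule EI)
    show "E \<noteq> carrier L" using Ecls[of "\<one>" 0] one_notin by (auto simp: one_L)
    fix U V assume U: "U \<in> carrier L" and V: "V \<in> carrier L" and UV: "U \<otimes>\<^bsub>L\<^esub> V \<in> E" and nU: "U \<notin> E"
    obtain a n where a: "a \<in> carrier R" "U = cls (a, n)" using U by (rule L_cases)
    obtain b m where b: "b \<in> carrier R" "V = cls (b, m)" using V by (rule L_cases)
    have "a \<otimes> b \<in> Q" "a \<notin> Q" using UV nU a b Ecls by (simp_all add: mult_cls)
    then obtain N :: nat where "b [^] N \<in> Q" using Q a b unfolding primary_ideal_def by blast
    then have "V [^]\<^bsub>L\<^esub> N \<in> E" using b Ecls by (simp add: pow_cls)
    then show "\<exists>N::nat. V [^]\<^bsub>L\<^esub> N \<in> E" by blast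
  qed
  have "res R f E = Q" using Ecls Qc by (auto simp: res_def loc_map_def)
  with EP show ?thesis by blast
qed

end


definition PT :: "('a, 'b) ring_scheme \<Rightarrow> ('a \<Rightarrow> bool) topology" where
  "PT R = product_topology (\<lambda>_. discrete_topology (UNIV :: bool set)) (carrier R)"

definition chi :: "('a, 'b) ring_scheme \<Rightarrow> 'a set \<Rightarrow> 'a \<Rightarrow> bool" where
  "chi R I = restrict (\<lambda>x. x \<in> I) (carrier R)"

lemma ideal_top_alt: "ideal_top R = pullback_topology (proper_ideals R) (chi R) (PT R)"
  unfolding ideal_top_def PT_def chi_def[abs_def] by (rule refl)

lemma topspace_PT: "topspace (PT R) = (\<Pi>\<^sub>E i\<in>carrier R. UNIV)"
  by (simp add: PT_def)

lemma chi_in: "chi R I \<in> topspace (PT R)"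
  by (simp add: topspace_PT chi_def)

lemma topspace_ideal_top [simp]: "topspace (ideal_top R) = proper_ideals R"
  using chi_in by (auto simp: ideal_top_alt topspace_pullback_topology)

lemma cont_chi: "continuous_map (ideal_top R) (PT R) (chi R)"
  unfolding ideal_top_alt using continuous_map_pullback[OF continuous_map_id] by (simp add: o_def)

lemma cont_coord:
  assumes "a \<in> carrier R"
  shows "continuous_map (ideal_top R) (discrete_topology UNIV) (\<lambda>I. a \<in> I)"
proof -
  have "continuous_map (ideal_top R) (discrete_topology UNIV) ((\<lambda>h. h a) \<circ> chi R)"
    using continuous_map_compose[OF cont_chi[unfolded PT_def] continuous_map_product_projection[OF assms]]
    by (simp add: PT_def)
  then show ?thesis using assms by (simp add: o_def chi_def)
qed

lemma open_coord:
  assumes "a \<in> carrier R"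
  shows "openin (ideal_top R) {I \<in> proper_ideals R. a \<in> I}"
    "openin (ideal_top R) {I \<in> proper_ideals R. a \<notin> I}"
  using openin_continuous_map_preimage[OF cont_coord[OF assms], of "{True}"]
    openin_continuous_map_preimage[OF cont_coord[OF assms], of "{False}"]
  by auto

lemma cont_bool:
  assumes "openin T {x \<in> topspace T. h x}" "openin T {x \<in> topspace T. \<not> h x}"
  shows "continuous_map T (discrete_topology UNIV) h"
  unfolding continuous_map_def
proof (intro conjI allI impI)
  show "h \<in> topspace T \<rightarrow> topspace (discrete_topology UNIV)" by simp
  fix U :: "bool set" assume "openin (discrete_topology UNIV) U"
  have "{x \<in> topspace T. h x \<in> U} = (if True \<in> U then {x \<in> topspace T. h x} else {}) \<union>
      (if False \<in> U then {x \<in> topspace T. \<not> h x} else {})"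
    by (cases "True \<in> U"; cases "False \<in> U") (auto; metis (full_types))+
  then show "openin T {x \<in> topspace T. h x \<in> U}"
    using assms by auto
qed

lemma cont_into_ideal_top:
  assumes "\<And>x. x \<in> topspace T \<Longrightarrow> g x \<in> proper_ideals R"
    and "\<And>a. a \<in> carrier R \<Longrightarrow> openin T {x \<in> topspace T. a \<in> g x}"
    and "\<And>a. a \<in> carrier R \<Longrightarrow> openin T {x \<in> topspace T. a \<notin> g x}"
  shows "continuous_map T (ideal_top R) g"
  unfolding ideal_top_alt
proof (rule continuous_map_pullback')
  show "topspace T \<subseteq> g -` proper_ideals R" using assms(1) by auto
  show "continuous_map T (PT R) (chi R \<circ> g)"
    unfolding PT_def continuous_map_componentwise
  proof (intro conjI ballI)
    show "(chi R \<circ> g) ` topspace T \<subseteq> extensional (carrier R)" by (auto simp: chi_def)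
    fix a assume a: "a \<in> carrier R"
    show "continuous_map T (discrete_topology UNIV) (\<lambda>x. (chi R \<circ> g) x a)"
      using a assms(2,3)[OF a] by (auto simp: chi_def intro!: cont_bool)
  qed
qed

lemma proper_sub: "I \<in> proper_ideals R \<Longrightarrow> I \<subseteq> carrier R"
  by (auto simp: proper_ideals_def dest: ideal.Icarr)

lemma homeo_PT: "homeomorphic_map (ideal_top R) (subtopology (PT R) (chi R ` proper_ideals R)) (chi R)"
  unfolding homeomorphic_map_maps homeomorphic_maps_def
proof (intro exI[of _ "\<lambda>h. {x \<in> carrier R. h x}"] conjI ballI)
  show "continuous_map (ideal_top R) (subtopology (PT R) (chi R ` proper_ideals R)) (chi R)"
    by (rule continuous_map_into_subtopology[OF cont_chi]) auto
  have "continuous_map (subtopology (PT R) (chi R ` proper_ideals R)) (PT R) (chi R \<circ> (\<lambda>h. {x \<in> carrier R. h x}))"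
  proof (rule continuous_map_eq[OF continuous_map_from_subtopology[OF continuous_map_id]])
    fix h assume "h \<in> topspace (subtopology (PT R) (chi R ` proper_ideals R))"
    then have "h \<in> (\<Pi>\<^sub>E i\<in>carrier R. UNIV)" by (simp add: topspace_PT)
    then show "id h = (chi R \<circ> (\<lambda>h. {x \<in> carrier R. h x})) h"
      by (auto simp: chi_def PiE_def extensional_def fun_eq_iff)
  qed
  moreover have "topspace (subtopology (PT R) (chi R ` proper_ideals R)) \<subseteq> (\<lambda>h. {x \<in> carrier R. h x}) -` proper_ideals R"
  proof
    fix h assume "h \<in> topspace (subtopology (PT R) (chi R ` proper_ideals R))"
    then obtain I where "I \<in> proper_ideals R" "h = chi R I" by auto
    moreover then have "{x \<in> carrier R. h x} = I" using proper_sub[of I R] by (auto simp: chi_def)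
    ultimately show "h \<in> (\<lambda>h. {x \<in> carrier R. h x}) -` proper_ideals R" by simp
  qed
  ultimately show "continuous_map (subtopology (PT R) (chi R ` proper_ideals R)) (ideal_top R) (\<lambda>h. {x \<in> carrier R. h x})"
    unfolding ideal_top_alt by (rule continuous_map_pullback')
next
  fix I assume "I \<in> topspace (ideal_top R)"
  then show "{x \<in> carrier R. chi R I x} = I" using proper_sub[of I R] by (auto simp: chi_def)
next
  fix h assume "h \<in> topspace (subtopology (PT R) (chi R ` proper_ideals R))"
  then obtain I where "I \<in> proper_ideals R" "h = chi R I" by auto
  moreover then have "{x \<in> carrier R. h x} = I" using proper_sub[of I R] by (auto simp: chi_def)
  ultimately show "chi R {x \<in> carrier R. h x} = h" by simp
qed

lemma hausdorff_ideal_top: "Hausdorff_space (ideal_top R)"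
proof -
  have "Hausdorff_space (PT R)" unfolding PT_def
    by (simp add: Hausdorff_space_product_topology)
  then have "Hausdorff_space (subtopology (PT R) (chi R ` proper_ideals R))"
    by (rule Hausdorff_space_subtopology)
  then show ?thesis
    using homeomorphic_Hausdorff_space[OF homeomorphic_map_imp_homeomorphic_space[OF homeo_PT[of R]]] by blast
qed

definition BB :: "('a, 'b) ring_scheme \<Rightarrow> 'a \<Rightarrow> bool \<Rightarrow> ('a \<Rightarrow> bool) set" where
  "BB R a v = {h \<in> topspace (PT R). h a = v}"

lemma closed_BB: "a \<in> carrier R \<Longrightarrow> closedin (PT R) (BB R a v)"
  unfolding BB_def PT_def
  using closedin_continuous_map_preimage[OF continuous_map_product_projection[of a "carrier R" "\<lambda>_. discrete_topology (UNIV :: bool set)"], of "{v}"]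
  by simp

lemma (in cring) closed_chi_image: "closedin (PT R) (chi R ` proper_ideals R)"
proof -
  define K where "K = {BB R \<zero> True, BB R \<one> False} \<union>
     {BB R a False \<union> BB R b False \<union> BB R (a \<oplus> b) True | a b. a \<in> carrier R \<and> b \<in> carrier R} \<union>
     {BB R a False \<union> BB R (r \<otimes> a) True | a r. a \<in> carrier R \<and> r \<in> carrier R}"
  have Kc: "closedin (PT R) S" if "S \<in> K" for S
    using that unfolding K_def by (auto intro!: closed_BB closedin_Un)
  have eq: "chi R ` proper_ideals R = \<Inter>K"
  proof
    show "chi R ` proper_ideals R \<subseteq> \<Inter>K"
    proof
      fix h assume "h \<in> chi R ` proper_ideals R"
      then obtain I where I: "I \<in> proper_ideals R" "h = chi R I" by auto
      have II: "ideal I R" and I1: "\<one> \<notin> I" using I(1) ideal.one_imp_carrier[of I R]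
        by (auto simp: proper_ideals_def)
      have ht: "h \<in> topspace (PT R)" using I chi_in by simp
      have z: "\<zero> \<in> I" using additive_subgroup.zero_closed[OF ideal.axioms(1)[OF II]] .
      have ad: "a \<oplus> b \<in> I" if "a \<in> I" "b \<in> I" for a b
        using additive_subgroup.a_closed[OF ideal.axioms(1)[OF II]] that by simp
      have ml: "r \<otimes> a \<in> I" if "a \<in> I" "r \<in> carrier R" for a r
        using ideal.I_l_closed[OF II] that by simp
      show "h \<in> \<Inter>K" unfolding K_def
        using ht z I1 ad ml by (auto simp: BB_def I(2) chi_def)
    qed
  next
    show "\<Inter>K \<subseteq> chi R ` proper_ideals R"
    proof
      fix h assume h: "h \<in> \<Inter>K"
      have "BB R \<zero> True \<in> K" "BB R \<one> False \<in> K" unfolding K_def by auto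
      then have ht: "h \<in> topspace (PT R)" and h0: "h \<zero>" and h1: "\<not> h \<one>" using h by (auto simp: BB_def)
      have had: "h (a \<oplus> b)" if "a \<in> carrier R" "b \<in> carrier R" "h a" "h b" for a b
      proof -
        have "BB R a False \<union> BB R b False \<union> BB R (a \<oplus> b) True \<in> K" unfolding K_def using that by blast
        then show ?thesis using h that by (auto simp: BB_def)
      qed
      have hml: "h (r \<otimes> a)" if "a \<in> carrier R" "r \<in> carrier R" "h a" for a r
      proof -
        have "BB R a False \<union> BB R (r \<otimes> a) True \<in> K" unfolding K_def using that by blast
        then show ?thesis using h that by (auto simp: BB_def)
      qed
      define I where "I = {x \<in> carrier R. h x}"
      have "ideal I R"
        by (rule ideal_intro2) (auto simp: I_def h0 intro: had hml)
      moreover have "I \<noteq> carrier R" using h1 by (auto simp: I_def)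
      ultimately have "I \<in> proper_ideals R" by (simp add: proper_ideals_def)
      moreover have "chi R I = h" using ht
        by (auto simp: chi_def I_def topspace_PT PiE_def extensional_def fun_eq_iff)
      ultimately show "h \<in> chi R ` proper_ideals R" by blast
    qed
  qed
  have "K \<noteq> {}" by (simp add: K_def)
  then show ?thesis unfolding eq using Kc by (rule closedin_Inter)
qed

lemma (in cring) compact_ideal_top: "compact_space (ideal_top R)"
proof -
  have "compact_space (PT R)" unfolding PT_def
    by (simp add: compact_space_product_topology compact_space_discrete_topology)
  then have "compact_space (subtopology (PT R) (chi R ` proper_ideals R))"
    using closedin_compact_space closed_chi_image compact_space_subtopology by blast
  then show ?thesis
    using homeomorphic_compact_space[OF homeomorphic_map_imp_homeomorphic_space[OF homeo_PT[of R]]] by blast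
qed



context locf
begin

lemma prim_sub: "prim S \<subseteq> proper_ideals S"
  unfolding prim_def using closure_of_subset_topspace[of "ideal_top S"] by simp

lemma cont_res: "continuous_map (ideal_top L) (ideal_top R) (res R f)"
proof (rule cont_into_ideal_top)
  fix J assume "J \<in> topspace (ideal_top L)"
  then show "res R f J \<in> proper_ideals R" by (intro res_proper) (auto simp: proper_ideals_def)
next
  fix a assume a: "a \<in> carrier R"
  have "{J \<in> topspace (ideal_top L). a \<in> res R f J} = {J \<in> proper_ideals L. cls (a, 0) \<in> J}"
    using a by (auto simp: res_def loc_map_def)
  then show "openin (ideal_top L) {J \<in> topspace (ideal_top L). a \<in> res R f J}"
    using open_coord(1)[of "cls (a, 0)" L] a by simp
  have "{J \<in> topspace (ideal_top L). a \<notin> res R f J} = {J \<in> proper_ideals L. cls (a, 0) \<notin> J}"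
    using a by (auto simp: res_def loc_map_def)
  then show "openin (ideal_top L) {J \<in> topspace (ideal_top L). a \<notin> res R f J}"
    using open_coord(2)[of "cls (a, 0)" L] a by simp
qed

lemma res_prim: "res R f ` prim L \<subseteq> prim R"
proof -
  have "res R f ` prim L \<subseteq> ideal_top R closure_of (res R f ` {I. primary_ideal L I})"
    unfolding prim_def by (rule continuous_map_image_closure_subset[OF cont_res])
  also have "\<dots> \<subseteq> prim R" unfolding prim_def
    by (rule closure_of_mono) (auto intro: res_primary)
  finally show ?thesis .
qed

lemma prim_ideal: "I \<in> prim L \<Longrightarrow> ideal I L"
  using prim_sub[of L] by (auto simp: proper_ideals_def)

lemma res_homeo:
  "homeomorphic_map (subtopology (ideal_top L) (prim L))
     (subtopology (ideal_top R) (res R f ` prim L)) (res R f)"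
  unfolding homeomorphic_map_maps homeomorphic_maps_def
proof (intro exI[of _ "\<lambda>J. {U \<in> carrier L. fst (loc_rep U) \<in> J}"] conjI ballI)
  have tX: "topspace (subtopology (ideal_top L) (prim L)) = prim L"
    using prim_sub[of L] by auto
  have rp: "res R f ` prim L \<subseteq> proper_ideals R"
    using res_prim prim_sub[of R] by auto
  have tY: "topspace (subtopology (ideal_top R) (res R f ` prim L)) = res R f ` prim L"
    using rp by auto
  show "continuous_map (subtopology (ideal_top L) (prim L)) (subtopology (ideal_top R) (res R f ` prim L)) (res R f)"
    by (rule continuous_map_into_subtopology[OF continuous_map_from_subtopology[OF cont_res]])
      (auto simp: tX)
  have gI: "{U \<in> carrier L. fst (loc_rep U) \<in> res R f I} = I" if "I \<in> prim L" for I
    using ideal_rep[OF prim_ideal[OF that]] by simp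
  show "continuous_map (subtopology (ideal_top R) (res R f ` prim L)) (subtopology (ideal_top L) (prim L))
     (\<lambda>J. {U \<in> carrier L. fst (loc_rep U) \<in> J})"
  proof (rule continuous_map_into_subtopology)
    show "(\<lambda>J. {U \<in> carrier L. fst (loc_rep U) \<in> J}) \<in> topspace (subtopology (ideal_top R) (res R f ` prim L)) \<rightarrow> prim L"
      unfolding tY using gI by auto
    show "continuous_map (subtopology (ideal_top R) (res R f ` prim L)) (ideal_top L)
       (\<lambda>J. {U \<in> carrier L. fst (loc_rep U) \<in> J})"
    proof (rule cont_into_ideal_top)
      fix J assume "J \<in> topspace (subtopology (ideal_top R) (res R f ` prim L))"
      then show "{U \<in> carrier L. fst (loc_rep U) \<in> J} \<in> proper_ideals L"
        unfolding tY using gI prim_sub[of L] by auto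
    next
      fix U assume U: "U \<in> carrier L"
      obtain a n where r: "loc_rep U = (a, n)" by (cases "loc_rep U")
      have a: "a \<in> carrier R" using in_L_eq(1)[OF U] rep_in[OF U] r by simp
      have e1: "{J \<in> topspace (subtopology (ideal_top R) (res R f ` prim L)). U \<in> {U \<in> carrier L. fst (loc_rep U) \<in> J}}
         = {J \<in> proper_ideals R. a \<in> J} \<inter> res R f ` prim L"
        unfolding tY using U r rp by auto
      show "openin (subtopology (ideal_top R) (res R f ` prim L))
          {J \<in> topspace (subtopology (ideal_top R) (res R f ` prim L)). U \<in> {U \<in> carrier L. fst (loc_rep U) \<in> J}}"
        unfolding e1 openin_subtopology using open_coord(1)[OF a] by blast
      have e2: "{J \<in> topspace (subtopology (ideal_top R) (res R f ` prim L)). U \<notin> {U \<in> carrier L. fst (loc_rep U) \<in> J}}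
         = {J \<in> proper_ideals R. a \<notin> J} \<inter> res R f ` prim L"
        unfolding tY using U r rp by auto
      show "openin (subtopology (ideal_top R) (res R f ` prim L))
          {J \<in> topspace (subtopology (ideal_top R) (res R f ` prim L)). U \<notin> {U \<in> carrier L. fst (loc_rep U) \<in> J}}"
        unfolding e2 openin_subtopology using open_coord(2)[OF a] by blast
    qed
  qed
  fix I assume "I \<in> topspace (subtopology (ideal_top L) (prim L))"
  then show "{U \<in> carrier L. fst (loc_rep U) \<in> res R f I} = I" using gI tX by simp
next
  fix J assume "J \<in> topspace (subtopology (ideal_top R) (res R f ` prim L))"
  then obtain I where "I \<in> prim L" "J = res R f I"
    using res_prim prim_sub[of R] by auto
  moreover have "{U \<in> carrier L. fst (loc_rep U) \<in> res R f I} = I"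
    using ideal_rep[OF prim_ideal[OF \<open>I \<in> prim L\<close>]] by simp
  ultimately show "res R f {U \<in> carrier L. fst (loc_rep U) \<in> J} = J" by simp
qed

lemma res_compact: "compactin (subtopology (ideal_top R) (prim R)) (res R f ` prim L)"
proof -
  have "compactin (ideal_top L) (prim L)"
    unfolding prim_def by (rule closedin_compact_space[OF cring.compact_ideal_top[OF cring_L] closedin_closure_of])
  then have "compactin (ideal_top R) (res R f ` prim L)" by (rule image_compactin[OF _ cont_res])
  then show ?thesis using res_prim by (simp add: compactin_subtopology)
qed

end

lemma (in cring) cover:
  fixes fs :: "nat \<Rightarrow> 'a" and m :: nat
  assumes fs: "\<forall>i<m. fs i \<in> carrier R" and gen: "Idl (fs ` {..<m}) = carrier R"
  shows "(\<Union>i<m. res R (fs i) ` prim (loc_ring R (fs i))) = prim R"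
proof -
  have lf: "locf R (fs i)" if "i < m" for i
    using fs that by (simp add: locf_def locf_axioms_def is_cring)
  let ?U = "\<Union>i<m. res R (fs i) ` prim (loc_ring R (fs i))"
  have sub: "?U \<subseteq> prim R" using locf.res_prim[OF lf] by blast
  have cl: "closedin (ideal_top R) ?U"
  proof (rule closedin_Union)
    show "finite ((\<lambda>i. res R (fs i) ` prim (loc_ring R (fs i))) ` {..<m})" by simp
    fix T assume "T \<in> (\<lambda>i. res R (fs i) ` prim (loc_ring R (fs i))) ` {..<m}"
    then obtain i where i: "i < m" "T = res R (fs i) ` prim (loc_ring R (fs i))" by auto
    then have "compactin (ideal_top R) T"
      using locf.res_compact[OF lf[OF i(1)]] by (simp add: compactin_subtopology)
    then show "closedin (ideal_top R) T" by (rule compactin_imp_closedin[OF hausdorff_ideal_top])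
  qed
  have "{I. primary_ideal R I} \<subseteq> ?U"
  proof
    fix Q assume "Q \<in> {I. primary_ideal R I}"
    then have Q: "primary_ideal R Q" by simp
    obtain i where i: "i < m" "\<forall>n::nat. fs i [^] n \<notin> Q" using primary_cover[OF Q fs gen] by blast
    obtain E where E: "primary_ideal (loc_ring R (fs i)) E" "res R (fs i) E = Q"
      using locf.ext_primary[OF lf[OF i(1)] Q i(2)] by blast
    have "E \<in> proper_ideals (loc_ring R (fs i))" using E(1) by (simp add: primary_ideal_def proper_ideals_def)
    have "{I. primary_ideal (loc_ring R (fs i)) I} \<subseteq> topspace (ideal_top (loc_ring R (fs i)))"
      by (auto simp: primary_ideal_def proper_ideals_def)
    then have "{I. primary_ideal (loc_ring R (fs i)) I} \<subseteq> prim (loc_ring R (fs i))"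
      unfolding prim_def by (rule closure_of_subset)
    then have "E \<in> prim (loc_ring R (fs i))" using E(1) by blast
    then show "Q \<in> ?U" using i E(2) by blast
  qed
  then have "prim R \<subseteq> ?U" using closure_of_minimal[OF _ cl] unfolding prim_def by blast
  with sub show ?thesis by blast
qed

theorem proposition5p10:
  fixes R :: "('a, 'b) ring_scheme"
  assumes "cring R"
  shows "(\<forall>f. f \<in> carrier R \<and> (\<forall>n::nat. f [^]\<^bsub>R\<^esub> n \<noteq> \<zero>\<^bsub>R\<^esub>) \<longrightarrow>
            res R f ` prim (loc_ring R f) \<subseteq> prim R \<and>
            homeomorphic_map (subtopology (ideal_top (loc_ring R f)) (prim (loc_ring R f)))
                             (subtopology (ideal_top R) (res R f ` prim (loc_ring R f)))
                             (res R f) \<and>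
            compactin (subtopology (ideal_top R) (prim R)) (res R f ` prim (loc_ring R f)))
       \<and> (\<forall>(fs :: nat \<Rightarrow> 'a) (m::nat).
            (\<forall>i<m. fs i \<in> carrier R \<and> (\<forall>n::nat. fs i [^]\<^bsub>R\<^esub> n \<noteq> \<zero>\<^bsub>R\<^esub>)) \<and>
            genideal R (fs ` {..<m}) = carrier R \<longrightarrow>
            (\<Union>i<m. res R (fs i) ` prim (loc_ring R (fs i))) = prim R \<and>
            (\<forall>i<m. compactin (subtopology (ideal_top R) (prim R))
                              (res R (fs i) ` prim (loc_ring R (fs i)))))"
proof (intro conjI allI impI)
  fix f assume "f \<in> carrier R \<and> (\<forall>n::nat. f [^]\<^bsub>R\<^esub> n \<noteq> \<zero>\<^bsub>R\<^esub>)"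
  then have lf: "locf R f" using assms by (simp add: locf_def locf_axioms_def)
  show "res R f ` prim (loc_ring R f) \<subseteq> prim R" by (rule locf.res_prim[OF lf])
  show "homeomorphic_map (subtopology (ideal_top (loc_ring R f)) (prim (loc_ring R f)))
          (subtopology (ideal_top R) (res R f ` prim (loc_ring R f))) (res R f)"
    by (rule locf.res_homeo[OF lf])
  show "compactin (subtopology (ideal_top R) (prim R)) (res R f ` prim (loc_ring R f))"
    by (rule locf.res_compact[OF lf])
next
  fix fs :: "nat \<Rightarrow> 'a" and m :: nat
  assume H: "(\<forall>i<m. fs i \<in> carrier R \<and> (\<forall>n::nat. fs i [^]\<^bsub>R\<^esub> n \<noteq> \<zero>\<^bsub>R\<^esub>)) \<and>
            genideal R (fs ` {..<m}) = carrier R"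
  then show "(\<Union>i<m. res R (fs i) ` prim (loc_ring R (fs i))) = prim R"
    using cring.cover[OF assms, of m fs] by blast
next
  fix fs :: "nat \<Rightarrow> 'a" and m :: nat and i :: nat
  assume H: "(\<forall>i<m. fs i \<in> carrier R \<and> (\<forall>n::nat. fs i [^]\<^bsub>R\<^esub> n \<noteq> \<zero>\<^bsub>R\<^esub>)) \<and>
            genideal R (fs ` {..<m}) = carrier R" and i: "i < m"
  then have "locf R (fs i)" using assms by (simp add: locf_def locf_axioms_def)
  then show "compactin (subtopology (ideal_top R) (prim R)) (res R (fs i) ` prim (loc_ring R (fs i)))"
    by (rule locf.res_compact)
qed

end
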